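(* Let $N\ge2$ and $\sigma_1,\dots,\sigma_N>0$. Let $R$ be the $(N-1)\times(N-1)$ tridiagonal matrix with $R_{ii}=1$, $R_{i,i+1}=R_{i+1,i}=-1/2$ (other entries $0$), and $A$ the $(N-1)\times(N-1)$ tridiagonal matrix with $A_{ii}=\sigma_i^2+\sigma_{i+1}^2$, $A_{i,i+1}=A_{i+1,i}=-\sigma_{i+1}^2$ (other entries $0$). Then for $1\le k\le l\le N-1$, $$(R^{-1}AR^{-1})_{kl}=\frac{4(N-k)(N-l)}{N^2}\sum_{p=1}^k\sigma_p^2-\frac{4k(N-l)}{N^2}\sum_{p=k+1}^l\sigma_p^2+\frac{4kl}{N^2}\sum_{p=l+1}^N\sigma_p^2.$$ *)

theory Defs
  imports "Jordan_Normal_Form.Matrix"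
begin

definition mat_inv :: "real mat \<Rightarrow> real mat" where
  "mat_inv A = (THE B. B \<in> carrier_mat (dim_row A) (dim_row A) \<and> inverts_mat A B \<and> inverts_mat B A)"

(* R: (N-1)x(N-1) tridiagonal, R_ii = 1, R_{i,i+1} = R_{i+1,i} = -1/2.
   JNF indices are 0-based: 0-based (i,j) is the paper's (i+1,j+1). *)
definition Rmat :: "nat \<Rightarrow> real mat" where
  "Rmat N = mat (N - 1) (N - 1) (\<lambda>(i, j).
     if i = j then 1 else if i + 1 = j \<or> j + 1 = i then - 1 / 2 else 0)"

(* A: (N-1)x(N-1) tridiagonal with paper entries A_ii = s_i^2 + s_{i+1}^2,
   A_{i,i+1} = A_{i+1,i} = - s_{i+1}^2; sigma is indexed 1..N as in the paper. *)
definition Amat :: "nat \<Rightarrow> (nat \<Rightarrow> real) \<Rightarrow> real mat" where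
  "Amat N \<sigma> = mat (N - 1) (N - 1) (\<lambda>(i, j).
     if i = j then (\<sigma> (i + 1))\<^sup>2 + (\<sigma> (i + 2))\<^sup>2
     else if i + 1 = j \<or> j + 1 = i then - (\<sigma> (max i j + 1))\<^sup>2 else 0)"

end

theory Submission
  imports Defs
begin

lemma mult_mat_entry:
  assumes "i < a" "j < c"
  shows "(mat a b f * mat b c g) $$ (i,j) = (\<Sum>m\<in>{0..<b}. f (i,m) * g (m,j))"
  using assms by (auto simp: scalar_prod_def intro!: sum.cong)

definition g :: "nat \<Rightarrow> nat \<Rightarrow> nat \<Rightarrow> real" where
  "g N i j = (if i \<le> j then 2*(real i+1)*(real N - real j - 1)/real N
              else 2*(real j+1)*(real N - real i - 1)/real N)"

definition r :: "nat \<Rightarrow> nat \<Rightarrow> real" where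
  "r i m = (if i = m then 1 else if i + 1 = m \<or> m + 1 = i then - 1 / 2 else 0)"

lemma g_sym: "g N i j = g N j i"
  unfolding g_def by auto

lemma r_sum:
  assumes "i < n"
  shows "(\<Sum>m\<in>{0..<n}. r i m * h m) =
     h i - 1/2 * (if i + 1 < n then h (i+1) else 0) - 1/2 * (if 1 \<le> i then h (i - 1) else 0)"
proof -
  have "(\<Sum>m\<in>{0..<n}. r i m * h m) = (\<Sum>m\<in>{0..<n}. (if m = i then h m else 0)
      + (if m = i + 1 then -1/2 * h m else 0) + (if m = i - 1 then (if 1 \<le> i then -1/2 * h m else 0) else 0))"
    by (rule sum.cong) (auto simp: r_def)
  also have "\<dots> = h i - 1/2 * (if i + 1 < n then h (i+1) else 0) - 1/2 * (if 1 \<le> i then h (i - 1) else 0)"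
    using assms by (simp only: sum.distrib sum.delta') auto
  finally show ?thesis .
qed

lemma g_last: "j < N - 1 \<Longrightarrow> g N (N - 1) j = 0"
  unfolding g_def by (auto simp: of_nat_diff)

lemma RG_entry:
  assumes N: "N \<ge> 2" and i: "i < N - 1" and j: "j < N - 1"
  shows "(\<Sum>m\<in>{0..<N-1}. r i m * g N m j) = (if i = j then 1 else 0)"
proof -
  have e: "(if i + 1 < N - 1 then g N (i+1) j else 0) = g N (i+1) j"
    using g_last[OF j] i proof (cases "i + 1 < N - 1")
    case False
    then have "i + 1 = N - 1" using i by linarith
    then show ?thesis using False g_last[OF j] by simp
  qed simp
  have Npos: "real N > 0" using N by simp
  have "(\<Sum>m\<in>{0..<N-1}. r i m * g N m j) = g N i j - 1/2 * g N (i+1) j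
      - 1/2 * (if 1 \<le> i then g N (i - 1) j else 0)"
    using r_sum[OF i, of "\<lambda>m. g N m j"] e by simp
  also have "\<dots> = (if i = j then 1 else 0)"
  proof (cases i)
    case 0
    then show ?thesis using Npos by (cases j) (auto simp: g_def field_simps)
  next
    case (Suc i')
    have "i < j \<or> i = j \<or> j < i" by auto
    then show ?thesis using Npos Suc
      by (elim disjE) (auto simp: g_def field_simps)
  qed
  finally show ?thesis .
qed

definition Gm :: "nat \<Rightarrow> real mat" where
  "Gm N = mat (N-1) (N-1) (\<lambda>(i,j). g N i j)"

lemma Rmat_alt: "Rmat N = mat (N-1) (N-1) (\<lambda>(i,j). r i j)"
  unfolding Rmat_def r_def by simp

lemma r_sym: "r i j = r j i" unfolding r_def by auto

lemma RG: assumes "N \<ge> 2" shows "Rmat N * Gm N = 1\<^sub>m (N-1)"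
proof (rule eq_matI)
  fix i j assume "i < dim_row (1\<^sub>m (N-1) :: real mat)" "j < dim_col (1\<^sub>m (N-1) :: real mat)"
  then have ij: "i < N - 1" "j < N - 1" by auto
  show "(Rmat N * Gm N) $$ (i, j) = 1\<^sub>m (N - 1) $$ (i, j)"
    unfolding Rmat_alt Gm_def using ij RG_entry[OF assms ij]
    by (simp only: mult_mat_entry[OF ij]) simp
qed (auto simp: Rmat_def Gm_def)

lemma GR: assumes "N \<ge> 2" shows "Gm N * Rmat N = 1\<^sub>m (N-1)"
proof (rule eq_matI)
  fix i j assume "i < dim_row (1\<^sub>m (N-1) :: real mat)" "j < dim_col (1\<^sub>m (N-1) :: real mat)"
  then have ij: "i < N - 1" "j < N - 1" by auto
  have "(\<Sum>m\<in>{0..<N-1}. g N i m * r m j) = (\<Sum>m\<in>{0..<N-1}. r j m * g N m i)"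
    by (rule sum.cong) (auto simp: g_sym r_sym)
  then show "(Gm N * Rmat N) $$ (i, j) = 1\<^sub>m (N - 1) $$ (i, j)"
    unfolding Rmat_alt Gm_def using ij RG_entry[OF assms ij(2) ij(1)]
    by (simp only: mult_mat_entry[OF ij]) simp
qed (auto simp: Rmat_def Gm_def)

lemma inv_R: assumes "N \<ge> 2" shows "mat_inv (Rmat N) = Gm N"
  unfolding mat_inv_def
proof (rule the_equality)
  show "Gm N \<in> carrier_mat (dim_row (Rmat N)) (dim_row (Rmat N)) \<and> inverts_mat (Rmat N) (Gm N) \<and> inverts_mat (Gm N) (Rmat N)"
    using RG[OF assms] GR[OF assms] by (auto simp: inverts_mat_def Rmat_def Gm_def)
next
  fix B assume B: "B \<in> carrier_mat (dim_row (Rmat N)) (dim_row (Rmat N)) \<and> inverts_mat (Rmat N) B \<and> inverts_mat B (Rmat N)"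
  then have Bc: "B \<in> carrier_mat (N-1) (N-1)" and BR: "B * Rmat N = 1\<^sub>m (N-1)"
    by (auto simp: inverts_mat_def Rmat_def)
  have Rc: "Rmat N \<in> carrier_mat (N-1) (N-1)" and Gc: "Gm N \<in> carrier_mat (N-1) (N-1)"
    by (auto simp: Rmat_def Gm_def)
  have "B = B * (Rmat N * Gm N)" using RG[OF assms] Bc by simp
  also have "\<dots> = (B * Rmat N) * Gm N" using Bc Rc Gc by (simp add: assoc_mult_mat)
  also have "\<dots> = Gm N" using BR Gc by simp
  finally show "B = Gm N" .
qed

definition b :: "nat \<Rightarrow> nat \<Rightarrow> real" where
  "b p i = (if i = p then 1 else if i + 1 = p then -1 else 0)"

definition c :: "nat \<Rightarrow> nat \<Rightarrow> nat \<Rightarrow> real" where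
  "c N p k = (if p \<le> k then 2*(real N - real k - 1)/real N else -2*(real k+1)/real N)"

definition Bm where "Bm N = mat N (N-1) (\<lambda>(p,i). b p i)"
definition BTm where "BTm N = mat (N-1) N (\<lambda>(i,p). b p i)"
definition Dm where "Dm N \<sigma> = mat N N (\<lambda>(p,q). if p = q then (\<sigma> (p+1))\<^sup>2 else 0)"
definition Cm where "Cm N = mat N (N-1) (\<lambda>(p,k). c N p k)"
definition CTm where "CTm N = mat (N-1) N (\<lambda>(k,p). c N p k)"

lemma D_mult: assumes "f = (\<lambda>(p,q). if p = q then (\<sigma> (p+1))\<^sup>2 else 0)"
  shows "mat N N f * mat N m h = mat N m (\<lambda>(p,j). (\<sigma> (p+1))\<^sup>2 * h (p,j))"
proof (rule eq_matI)
  fix i j assume "i < dim_row (mat N m (\<lambda>(p,j). (\<sigma> (p+1))\<^sup>2 * h (p,j)))"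
     "j < dim_col (mat N m (\<lambda>(p,j). (\<sigma> (p+1))\<^sup>2 * h (p,j)))"
  then have ij: "i < N" "j < m" by auto
  have "(\<Sum>q\<in>{0..<N}. f (i,q) * h (q,j)) = (\<Sum>q\<in>{0..<N}. if q = i then (\<sigma> (i+1))\<^sup>2 * h (q,j) else 0)"
    by (rule sum.cong) (auto simp: assms)
  then show "(mat N N f * mat N m h) $$ (i, j) = mat N m (\<lambda>(p,j). (\<sigma> (p+1))\<^sup>2 * h (p,j)) $$ (i, j)"
    using ij by (simp only: mult_mat_entry[OF ij]) simp
qed auto

lemma b_sum:
  assumes "p < N"
  shows "(\<Sum>i\<in>{0..<N-1}. b p i * h i) = (if p < N - 1 then h p else 0) - (if 1 \<le> p then h (p - 1) else 0)"
proof -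
  have "(\<Sum>i\<in>{0..<N-1}. b p i * h i) = (\<Sum>i\<in>{0..<N-1}. (if i = p then h i else 0) + (if i = p - 1 then (if 1 \<le> p then - h i else 0) else 0))"
    by (rule sum.cong) (auto simp: b_def)
  also have "\<dots> = (if p < N - 1 then h p else 0) - (if 1 \<le> p then h (p - 1) else 0)"
    using assms by (simp only: sum.distrib sum.delta') auto
  finally show ?thesis .
qed

lemma BG_entry:
  assumes N: "N \<ge> 2" and p: "p < N" and k: "k < N - 1"
  shows "(\<Sum>i\<in>{0..<N-1}. b p i * g N i k) = c N p k"
proof -
  have e: "(if p < N - 1 then g N p k else 0) = g N p k"
  proof (cases "p < N - 1")
    case False
    then have "p = N - 1" using p by linarith
    then show ?thesis using False g_last[OF k] by simp
  qed simp
  have Npos: "real N > 0" using N by simp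
  have "(\<Sum>i\<in>{0..<N-1}. b p i * g N i k) = g N p k - (if 1 \<le> p then g N (p - 1) k else 0)"
    using b_sum[OF p, of "\<lambda>i. g N i k"] e by simp
  also have "\<dots> = c N p k"
  proof (cases p)
    case 0
    then show ?thesis using Npos by (auto simp: g_def c_def field_simps)
  next
    case (Suc p')
    have "p \<le> k \<or> k < p" by auto
    then show ?thesis using Npos Suc
      by (elim disjE) (auto simp: g_def c_def field_simps)
  qed
  finally show ?thesis .
qed

lemma BG: assumes "N \<ge> 2" shows "Bm N * Gm N = Cm N"
proof (rule eq_matI)
  fix i j assume "i < dim_row (Cm N)" "j < dim_col (Cm N)"
  then have ij: "i < N" "j < N - 1" by (auto simp: Cm_def)
  show "(Bm N * Gm N) $$ (i, j) = Cm N $$ (i, j)"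
    unfolding Bm_def Gm_def Cm_def using ij BG_entry[OF assms ij]
    by (simp only: mult_mat_entry[OF ij]) simp
qed (auto simp: Bm_def Gm_def Cm_def)

lemma GBT: assumes "N \<ge> 2" shows "Gm N * BTm N = CTm N"
proof (rule eq_matI)
  fix i j assume "i < dim_row (CTm N)" "j < dim_col (CTm N)"
  then have ij: "i < N - 1" "j < N" by (auto simp: CTm_def)
  have "(\<Sum>m\<in>{0..<N-1}. g N i m * b j m) = (\<Sum>m\<in>{0..<N-1}. b j m * g N m i)"
    by (rule sum.cong) (auto simp: g_sym)
  then show "(Gm N * BTm N) $$ (i, j) = CTm N $$ (i, j)"
    unfolding BTm_def Gm_def CTm_def using ij BG_entry[OF assms ij(2) ij(1)]
    by (simp only: mult_mat_entry[OF ij]) simp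
qed (auto simp: BTm_def Gm_def CTm_def)

lemma A_fact: assumes "N \<ge> 2" shows "Amat N \<sigma> = BTm N * (Dm N \<sigma> * Bm N)"
proof -
  have DB: "Dm N \<sigma> * Bm N = mat N (N-1) (\<lambda>(p,j). (\<sigma> (p+1))\<^sup>2 * b p j)"
    unfolding Dm_def Bm_def by (subst D_mult) auto
  show ?thesis unfolding DB
  proof (rule eq_matI)
    fix i j assume "i < dim_row (BTm N * mat N (N - 1) (\<lambda>(p, j). (\<sigma> (p + 1))\<^sup>2 * b p j))"
      "j < dim_col (BTm N * mat N (N - 1) (\<lambda>(p, j). (\<sigma> (p + 1))\<^sup>2 * b p j))"
    then have ij: "i < N - 1" "j < N - 1" by (auto simp: BTm_def)
    have "(\<Sum>p\<in>{0..<N}. b p i * ((\<sigma> (p+1))\<^sup>2 * b p j)) =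
       (\<Sum>p\<in>{0..<N}. (if p = i then (\<sigma> (i+1))\<^sup>2 * b i j else 0) + (if p = i + 1 then - (\<sigma> (i+2))\<^sup>2 * b (i+1) j else 0))"
      by (rule sum.cong) (auto simp: b_def)
    also have "\<dots> = (\<sigma> (i+1))\<^sup>2 * b i j - (\<sigma> (i+2))\<^sup>2 * b (i+1) j"
      using ij by (simp only: sum.distrib sum.delta') auto
    also have "\<dots> = Amat N \<sigma> $$ (i,j)"
      using ij by (auto simp: Amat_def b_def max_def)
    finally show "Amat N \<sigma> $$ (i, j) = (BTm N * mat N (N - 1) (\<lambda>(p, j). (\<sigma> (p + 1))\<^sup>2 * b p j)) $$ (i, j)"
      using ij unfolding BTm_def by (simp only: mult_mat_entry[OF ij]) simp
  qed (auto simp: Amat_def BTm_def)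
qed

lemma shift_sum:
  fixes f :: "nat \<Rightarrow> real" and a b :: nat
  shows "(\<Sum>p\<in>{a..<b}. f (p+1)) = (\<Sum>p=a+1..b. f p)"
proof -
  have "(\<Sum>p=a+1..b. f p) = (\<Sum>p\<in>{Suc a..<Suc b}. f p)"
    by (simp add: atLeastLessThanSuc_atLeastAtMost)
  also have "\<dots> = (\<Sum>p\<in>{a..<b}. f (Suc p))" by (rule sum.shift_bounds_Suc_ivl)
  finally show ?thesis by simp
qed

lemma main_sum:
  assumes N: "N \<ge> 2" and k: "1 \<le> k" "k \<le> l" "l \<le> N - 1"
  shows "(\<Sum>p\<in>{0..<N}. c N p (k-1) * ((\<sigma> (p+1))\<^sup>2 * c N p (l-1))) =
      4 * (real N - real k) * (real N - real l) / (real N)\<^sup>2 * (\<Sum>p = 1..k. (\<sigma> p)\<^sup>2)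
    - 4 * real k * (real N - real l) / (real N)\<^sup>2 * (\<Sum>p = k + 1..l. (\<sigma> p)\<^sup>2)
    + 4 * real k * real l / (real N)\<^sup>2 * (\<Sum>p = l + 1..N. (\<sigma> p)\<^sup>2)"
proof -
  let ?f = "\<lambda>p. c N p (k-1) * ((\<sigma> (p+1))\<^sup>2 * c N p (l-1))"
  have rk: "real (k - 1) = real k - 1" and rl: "real (l - 1) = real l - 1" using k by auto
  have split: "(\<Sum>p\<in>{0..<N}. ?f p) = (\<Sum>p\<in>{0..<k}. ?f p) + (\<Sum>p\<in>{k..<l}. ?f p) + (\<Sum>p\<in>{l..<N}. ?f p)"
    using k by (simp add: sum.atLeastLessThan_concat)
  have s1: "(\<Sum>p\<in>{0..<k}. ?f p) = (\<Sum>p\<in>{0..<k}. 4 * (real N - real k) * (real N - real l) / (real N)\<^sup>2 * (\<sigma> (p+1))\<^sup>2)"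
    by (rule sum.cong) (use k N in \<open>auto simp: c_def rk rl power2_eq_square field_simps\<close>)
  have s2: "(\<Sum>p\<in>{k..<l}. ?f p) = (\<Sum>p\<in>{k..<l}. - (4 * real k * (real N - real l) / (real N)\<^sup>2) * (\<sigma> (p+1))\<^sup>2)"
    by (rule sum.cong) (use k in \<open>auto simp: c_def rk rl power2_eq_square\<close>)
  have s3: "(\<Sum>p\<in>{l..<N}. ?f p) = (\<Sum>p\<in>{l..<N}. 4 * real k * real l / (real N)\<^sup>2 * (\<sigma> (p+1))\<^sup>2)"
    by (rule sum.cong) (use k in \<open>auto simp: c_def rk rl power2_eq_square\<close>)
  show ?thesis
    unfolding split s1 s2 s3 sum_distrib_left[symmetric]
    using shift_sum[of "\<lambda>p. (\<sigma> p)\<^sup>2" 0 k] shift_sum[of "\<lambda>p. (\<sigma> p)\<^sup>2" k l] shift_sum[of "\<lambda>p. (\<sigma> p)\<^sup>2" l N]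
    by simp
qed

theorem lemma4p5:
  fixes N :: nat and \<sigma> :: "nat \<Rightarrow> real" and k l :: nat
  assumes "N \<ge> 2"
    and "\<And>p. 1 \<le> p \<Longrightarrow> p \<le> N \<Longrightarrow> \<sigma> p > 0"
    and "1 \<le> k" and "k \<le> l" and "l \<le> N - 1"
  shows "(mat_inv (Rmat N) * Amat N \<sigma> * mat_inv (Rmat N)) $$ (k - 1, l - 1) =
      4 * (real N - real k) * (real N - real l) / (real N)\<^sup>2 * (\<Sum>p = 1..k. (\<sigma> p)\<^sup>2)
    - 4 * real k * (real N - real l) / (real N)\<^sup>2 * (\<Sum>p = k + 1..l. (\<sigma> p)\<^sup>2)
    + 4 * real k * real l / (real N)\<^sup>2 * (\<Sum>p = l + 1..N. (\<sigma> p)\<^sup>2)"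
proof -
  let ?G = "Gm N" and ?BT = "BTm N" and ?D = "Dm N \<sigma>" and ?B = "Bm N"
  have c: "?G \<in> carrier_mat (N-1) (N-1)" "?BT \<in> carrier_mat (N-1) N" "?D \<in> carrier_mat N N"
    "?B \<in> carrier_mat N (N-1)"
    by (auto simp: Gm_def BTm_def Dm_def Bm_def)
  have "mat_inv (Rmat N) * Amat N \<sigma> * mat_inv (Rmat N) = ?G * (?BT * (?D * ?B)) * ?G"
    using inv_R[OF assms(1)] A_fact[OF assms(1)] by simp
  also have "\<dots> = (?G * ?BT) * (?D * (?B * ?G))"
    using c
  proof -
    have 1: "?D * ?B \<in> carrier_mat N (N-1)" "?BT * (?D * ?B) \<in> carrier_mat (N-1) (N-1)"
      "?B * ?G \<in> carrier_mat N (N-1)" "?D * (?B * ?G) \<in> carrier_mat N (N-1)"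
      using c by auto
    have "?G * (?BT * (?D * ?B)) * ?G = ?G * ((?BT * (?D * ?B)) * ?G)"
      using c 1 by (rule_tac assoc_mult_mat) auto
    also have "(?BT * (?D * ?B)) * ?G = ?BT * ((?D * ?B) * ?G)"
      using c 1 by (rule_tac assoc_mult_mat) auto
    also have "(?D * ?B) * ?G = ?D * (?B * ?G)"
      using c 1 by (rule_tac assoc_mult_mat) auto
    also have "?G * (?BT * (?D * (?B * ?G))) = (?G * ?BT) * (?D * (?B * ?G))"
      using c 1 by (rule_tac assoc_mult_mat[symmetric]) auto
    finally show ?thesis .
  qed
  also have "\<dots> = CTm N * (?D * Cm N)" using GBT[OF assms(1)] BG[OF assms(1)] by simp
  also have "?D * Cm N = mat N (N-1) (\<lambda>(p,j). (\<sigma> (p+1))\<^sup>2 * c N p j)"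
    unfolding Dm_def Cm_def by (subst D_mult) auto
  finally have E: "mat_inv (Rmat N) * Amat N \<sigma> * mat_inv (Rmat N) = CTm N * mat N (N-1) (\<lambda>(p,j). (\<sigma> (p+1))\<^sup>2 * c N p j)" .
  have ij: "k - 1 < N - 1" "l - 1 < N - 1" using assms by auto
  have "(mat_inv (Rmat N) * Amat N \<sigma> * mat_inv (Rmat N)) $$ (k - 1, l - 1) =
     (\<Sum>p\<in>{0..<N}. c N p (k-1) * ((\<sigma> (p+1))\<^sup>2 * c N p (l-1)))"
    unfolding E CTm_def by (simp only: mult_mat_entry[OF ij]) simp
  then show ?thesis using main_sum[OF assms(1) assms(3-5)] by simp
qed

end
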